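(* The equivalence relation $E^0_=$ (also known as $=^{ce}$) is complete amongst the $\Pi^0_2$ equivalence relations on $\omega$ with respect to finitary reducibility: for every $\Pi^0_2$ equivalence relation $R$ on $\omega$, $R$ is finitarily reducible to $E^0_=$.
   Context: Let $W_e$ denote the $e$-th computably enumerable set under a standard indexing. The equivalence relation $E^0_=$ on $\omega$ is defined by $i~E^0_=~j$ iff $W_i=W_j$; it is a $\Pi^0_2$ equivalence relation. For equivalence relations $E,F$ on $\omega$ and $n\geq 1$, $E$ is $n$-arily reducible to $F$ if there is a total computable function $f$ taking each $n$-tuple $(x_0,\ldots,x_{n-1})$ to an $n$-tuple $(y_0,\ldots,y_{n-1})$ such that for all $i<j<n$, $x_i~E~x_j$ iff $y_i~F~y_j$. $E$ is finitarily reducible to $F$ if such $n$-ary reductions exist uniformly for all $n\in\omega$, i.e., there is a single total computable function $f(n,i,\vec{x})$ such that for each $n$, $f(n,-,-)$ is an $n$-ary reduction from $E$ to $F$. *)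

theory Defs
  imports Main "HOL-Library.Nat_Bijection"
begin

text \<open>A concrete model of partial recursive functions: unary functions on nat,
  with multiple arguments coded by Cantor pairing (prod_encode).\<close>

datatype recf =
    Zero
  | Succ
  | Fst
  | Snd
  | Comp recf recf
  | Pair recf recf
  | Rec recf recf
  | Mu recf

inductive eval :: "recf \<Rightarrow> nat \<Rightarrow> nat \<Rightarrow> bool" where
  "eval Zero x 0"
| "eval Succ x (Suc x)"
| "eval Fst x (fst (prod_decode x))"
| "eval Snd x (snd (prod_decode x))"
| "eval g x y \<Longrightarrow> eval f y z \<Longrightarrow> eval (Comp f g) x z"
| "eval f x a \<Longrightarrow> eval g x b \<Longrightarrow> eval (Pair f g) x (prod_encode (a, b))"
| "eval f x y \<Longrightarrow> eval (Rec f g) (prod_encode (x, 0)) y"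
| "eval (Rec f g) (prod_encode (x, n)) y \<Longrightarrow>
   eval g (prod_encode (x, prod_encode (n, y))) z \<Longrightarrow>
   eval (Rec f g) (prod_encode (x, Suc n)) z"
| "eval f (prod_encode (x, n)) 0 \<Longrightarrow>
   (\<forall>m<n. \<exists>k. eval f (prod_encode (x, m)) (Suc k)) \<Longrightarrow>
   eval (Mu f) x n"

lemma fst_prod_decode_le: "fst (prod_decode m) \<le> m"
  by (metis le_prod_encode_1 prod.collapse prod_decode_inverse)

lemma snd_prod_decode_le: "snd (prod_decode m) \<le> m"
  by (metis le_prod_encode_2 prod.collapse prod_decode_inverse)

function decode :: "nat \<Rightarrow> recf" where
  "decode n =
    (let m = n div 8; a = fst (prod_decode m); b = snd (prod_decode m) in
     if n mod 8 = 0 then Zero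
     else if n mod 8 = 1 then Succ
     else if n mod 8 = 2 then Fst
     else if n mod 8 = 3 then Snd
     else if n mod 8 = 4 then Comp (decode a) (decode b)
     else if n mod 8 = 5 then Pair (decode a) (decode b)
     else if n mod 8 = 6 then Rec (decode a) (decode b)
     else Mu (decode m))"
  by auto
lemma decode_lt: "n div 8 < n" if "n mod 8 \<noteq> 0" for n :: nat
  using that by (cases "n = 0") auto

lemma decode_lta: "fst (prod_decode (n div 8)) < n" if "n mod 8 \<noteq> 0" for n :: nat
  using decode_lt[OF that] fst_prod_decode_le[of "n div 8"] by linarith

lemma decode_ltb: "snd (prod_decode (n div 8)) < n" if "n mod 8 \<noteq> 0" for n :: nat
  using decode_lt[OF that] snd_prod_decode_le[of "n div 8"] by linarith

termination
  by (relation "measure id") (use decode_lt decode_lta decode_ltb in auto)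

definition phi :: "nat \<Rightarrow> nat \<Rightarrow> nat \<Rightarrow> bool" where
  "phi e x y \<longleftrightarrow> eval (decode e) x y"

definition W :: "nat \<Rightarrow> nat set" where
  "W e = {x. \<exists>y. phi e x y}"

definition ceq :: "nat \<Rightarrow> nat \<Rightarrow> bool" where
  "ceq i j \<longleftrightarrow> W i = W j"

definition decidable_pred :: "(nat \<Rightarrow> bool) \<Rightarrow> bool" where
  "decidable_pred P \<longleftrightarrow> (\<exists>e. \<forall>x. phi e x (if P x then 1 else 0))"

definition pi02 :: "(nat \<Rightarrow> nat \<Rightarrow> bool) \<Rightarrow> bool" where
  "pi02 R \<longleftrightarrow> (\<exists>P. decidable_pred P \<and>
     (\<forall>x y. R x y \<longleftrightarrow> (\<forall>a. \<exists>b. P (prod_encode (prod_encode (x, y), prod_encode (a, b))))))"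

definition computable3 :: "(nat \<Rightarrow> nat \<Rightarrow> nat list \<Rightarrow> nat) \<Rightarrow> bool" where
  "computable3 f \<longleftrightarrow>
     (\<exists>e. \<forall>n i xs. phi e (prod_encode (n, prod_encode (i, list_encode xs))) (f n i xs))"

definition finitarily_reducible :: "(nat \<Rightarrow> nat \<Rightarrow> bool) \<Rightarrow> (nat \<Rightarrow> nat \<Rightarrow> bool) \<Rightarrow> bool" where
  "finitarily_reducible E F \<longleftrightarrow>
     (\<exists>f. computable3 f \<and>
        (\<forall>n xs. length xs = n \<longrightarrow>
           (\<forall>i j. i < j \<and> j < n \<longrightarrow> (E (xs ! i) (xs ! j) \<longleftrightarrow> F (f n i xs) (f n j xs)))))"

end

theory Submission
  imports Defs
begin



abbreviation pe :: "nat \<Rightarrow> nat \<Rightarrow> nat" where "pe a b \<equiv> prod_encode (a, b)"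
definition pf :: "nat \<Rightarrow> nat" where "pf x = fst (prod_decode x)"
definition ps :: "nat \<Rightarrow> nat" where "ps x = snd (prod_decode x)"
lemma pf_pe[simp]: "pf (pe a b) = a" by (simp add: pf_def)
lemma ps_pe[simp]: "ps (pe a b) = b" by (simp add: ps_def)
lemma pe_pf_ps[simp]: "pe (pf x) (ps x) = x" by (simp add: pf_def ps_def)

inductive_cases evZ: "eval Zero x y"
inductive_cases evS: "eval Succ x y"
inductive_cases evF: "eval Fst x y"
inductive_cases evSn: "eval Snd x y"
inductive_cases evC: "eval (Comp f g) x y"
inductive_cases evP: "eval (Pair f g) x y"
inductive_cases evR: "eval (Rec f g) x y"
inductive_cases evM: "eval (Mu f) x y"

lemma rec_det: assumes IHf: "\<And>x y y'. eval f x y \<Longrightarrow> eval f x y' \<Longrightarrow> y' = y"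
  and IHg: "\<And>x y y'. eval g x y \<Longrightarrow> eval g x y' \<Longrightarrow> y' = y"
  shows "eval (Rec f g) (pe x n) y \<Longrightarrow> eval (Rec f g) (pe x n) y' \<Longrightarrow> y' = y"
proof (induction n arbitrary: y y')
  case 0
  from 0(1) have a: "eval f x y" by (cases rule: evR) auto
  from 0(2) have b: "eval f x y'" by (cases rule: evR) auto
  from IHf[OF a b] show ?case .
next
  case (Suc n)
  from Suc.prems(1) obtain a where a: "eval (Rec f g) (pe x n) a" "eval g (pe x (pe n a)) y"
    by (cases rule: evR) auto
  from Suc.prems(2) obtain b where b: "eval (Rec f g) (pe x n) b" "eval g (pe x (pe n b)) y'"
    by (cases rule: evR) auto
  from Suc.IH[OF a(1) b(1)] a(2) b(2) IHg show ?case by blast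
qed

lemma eval_det: "eval p x y \<Longrightarrow> eval p x y' \<Longrightarrow> y' = y"
proof (induction p arbitrary: x y y')
  case (Comp f g) then show ?case by (blast elim: evC)
next
  case (Pair f g)
  from Pair.prems(1) obtain a b where "y = pe a b" "eval f x a" "eval g x b" by (auto elim: evP)
  moreover from Pair.prems(2) obtain a' b' where "y' = pe a' b'" "eval f x a'" "eval g x b'" by (auto elim: evP)
  ultimately show ?case using Pair.IH by metis
next
  case (Rec f g)
  have "x = pe (pf x) (ps x)" by simp
  with Rec rec_det[of f g "pf x" "ps x" y y'] show ?case by metis
next
  case (Mu f)
  from Mu.prems(1) have a: "eval f (pe x y) 0" "\<forall>m<y. \<exists>k. eval f (pe x m) (Suc k)" by (auto elim!: evM)
  from Mu.prems(2) have b: "eval f (pe x y') 0" "\<forall>m<y'. \<exists>k. eval f (pe x m) (Suc k)" by (auto elim!: evM)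
  show ?case
  proof (rule ccontr)
    assume "y' \<noteq> y"
    then consider "y < y'" | "y' < y" by linarith
    then show False
    proof cases
      case 1 with b a Mu.IH show ?thesis by (metis nat.simps(3))
    next
      case 2 with b a Mu.IH show ?thesis by (metis nat.simps(3))
    qed
  qed
qed (auto elim: evZ evS evF evSn)

definition cmp :: "recf \<Rightarrow> (nat \<Rightarrow> nat) \<Rightarrow> bool" where
  "cmp p F \<longleftrightarrow> (\<forall>x. eval p x (F x))"

lemma cmp_eval: "cmp p F \<Longrightarrow> eval p x y \<longleftrightarrow> y = F x"
  unfolding cmp_def using eval_det by blast

lemma cmp_eq: "cmp p F \<Longrightarrow> (\<And>x. F x = G x) \<Longrightarrow> cmp p G"
  unfolding cmp_def by simp

lemma cmp_Zero: "cmp Zero (\<lambda>_. 0)" unfolding cmp_def by (auto intro: eval.intros)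
lemma cmp_Succ: "cmp Succ Suc" unfolding cmp_def by (auto intro: eval.intros)
lemma cmp_Fst: "cmp Fst pf" unfolding cmp_def pf_def by (auto intro: eval.intros)
lemma cmp_Snd: "cmp Snd ps" unfolding cmp_def ps_def by (auto intro: eval.intros)
lemma cmp_Comp: "cmp f F \<Longrightarrow> cmp g G \<Longrightarrow> cmp (Comp f g) (\<lambda>x. F (G x))"
  unfolding cmp_def by (auto intro: eval.intros)
lemma cmp_Pair: "cmp f F \<Longrightarrow> cmp g G \<Longrightarrow> cmp (Pair f g) (\<lambda>x. pe (F x) (G x))"
  unfolding cmp_def by (auto intro: eval.intros)

primrec rech :: "(nat \<Rightarrow> nat) \<Rightarrow> (nat \<Rightarrow> nat) \<Rightarrow> nat \<Rightarrow> nat \<Rightarrow> nat" where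
  "rech F G x 0 = F x"
| "rech F G x (Suc n) = G (pe x (pe n (rech F G x n)))"

lemma cmp_Rec: assumes "cmp f F" "cmp g G"
  shows "cmp (Rec f g) (\<lambda>z. rech F G (pf z) (ps z))"
proof -
  have "eval (Rec f g) (pe x n) (rech F G x n)" for x n
    using assms by (induction n) (auto simp: cmp_def intro: eval.intros)
  then show ?thesis unfolding cmp_def by (metis pe_pf_ps)
qed

lemma cmp_Mu: assumes "cmp f F"
  shows "(\<exists>y. eval (Mu f) x y) \<longleftrightarrow> (\<exists>n. F (pe x n) = 0)"
proof
  assume "\<exists>y. eval (Mu f) x y"
  then show "\<exists>n. F (pe x n) = 0" using assms by (auto elim!: evM simp: cmp_eval)
next
  assume "\<exists>n. F (pe x n) = 0"
  define n where "n = (LEAST n. F (pe x n) = 0)"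
  have "F (pe x n) = 0" unfolding n_def by (rule LeastI_ex) fact
  moreover have "\<forall>m<n. \<exists>k. eval f (pe x m) (Suc k)"
  proof (intro allI impI)
    fix m assume "m < n"
    then have "F (pe x m) \<noteq> 0" unfolding n_def using not_less_Least by blast
    then show "\<exists>k. eval f (pe x m) (Suc k)" using assms
      by (metis cmp_eval not0_implies_Suc)
  qed
  ultimately show "\<exists>y. eval (Mu f) x y" using assms
    by (metis cmp_eval eval.intros(9))
qed




lemmas cmp_base = cmp_Zero cmp_Succ cmp_Fst cmp_Snd cmp_Comp cmp_Pair

definition idp where "idp = Pair Fst Snd"
lemma cmp_idp: "cmp idp (\<lambda>x. x)"
  unfolding idp_def by (rule cmp_eq, (rule cmp_base | assumption)+, simp)

primrec constp :: "nat \<Rightarrow> recf" where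
  "constp 0 = Zero" | "constp (Suc c) = Comp Succ (constp c)"
lemma cmp_constp: "cmp (constp c) (\<lambda>_. c)"
  by (induction c) (auto intro: cmp_Zero cmp_eq[OF cmp_Comp[OF cmp_Succ]])

lemmas cmp_rules = cmp_base cmp_idp cmp_constp

definition addp where "addp = Rec idp (Comp Succ (Comp Snd Snd))"
lemma rech_add: "rech (\<lambda>x. x) (\<lambda>w. Suc (ps (ps w))) x n = x + n"
  by (induction n) auto
lemma cmp_addp: "cmp addp (\<lambda>z. pf z + ps z)"
  unfolding addp_def by (rule cmp_eq, (rule cmp_Rec cmp_rules | assumption)+, simp add: rech_add)

definition add2 where "add2 p q = Comp addp (Pair p q)"
lemma cmp_add2: "cmp p P \<Longrightarrow> cmp q Q \<Longrightarrow> cmp (add2 p q) (\<lambda>x. P x + Q x)"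
  unfolding add2_def by (rule cmp_eq, (rule cmp_addp cmp_rules | assumption)+, simp)

definition predp where "predp = Comp (Rec Zero (Comp Fst Snd)) (Pair Zero idp)"
lemma rech_pred: "rech (\<lambda>x. 0) (\<lambda>w. pf (ps w)) x n = n - 1"
  by (induction n) auto
lemma cmp_predp: "cmp predp (\<lambda>x. x - 1)"
  unfolding predp_def by (rule cmp_eq, (rule cmp_Rec cmp_rules | assumption)+, simp add: rech_pred)

definition subp where "subp = Rec idp (Comp predp (Comp Snd Snd))"
lemma rech_sub: "rech (\<lambda>x. x) (\<lambda>w. ps (ps w) - Suc 0) x n = x - n"
  by (induction n) auto
lemma cmp_subp: "cmp subp (\<lambda>z. pf z - ps z)"
  unfolding subp_def by (rule cmp_eq, (rule cmp_Rec cmp_predp cmp_rules | assumption)+, simp add: rech_sub)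

definition sub2 where "sub2 p q = Comp subp (Pair p q)"
lemma cmp_sub2: "cmp p P \<Longrightarrow> cmp q Q \<Longrightarrow> cmp (sub2 p q) (\<lambda>x. P x - Q x)"
  unfolding sub2_def by (rule cmp_eq, (rule cmp_subp cmp_rules | assumption)+, simp)

definition ifz where "ifz p f g = Comp (Rec f (Comp g Fst)) (Pair idp p)"
lemma cmp_ifz: "cmp p P \<Longrightarrow> cmp f F \<Longrightarrow> cmp g G \<Longrightarrow>
   cmp (ifz p f g) (\<lambda>x. if P x = 0 then F x else G x)"
  unfolding ifz_def
  apply (rule cmp_eq, (rule cmp_Rec cmp_rules | assumption)+)
  apply (case_tac "P x") apply auto
  done

definition sump where "sump q = Rec Zero (add2 (Comp Snd Snd) (Comp q (Pair Fst (Comp Fst Snd))))"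
lemma rech_sum: "rech (\<lambda>x. 0) (\<lambda>w. ps (ps w) + Q (pe (pf w) (pf (ps w)))) x n = (\<Sum>m<n. Q (pe x m))"
  by (induction n) auto
lemma cmp_sump: "cmp q Q \<Longrightarrow> cmp (sump q) (\<lambda>z. \<Sum>m<ps z. Q (pe (pf z) m))"
  unfolding sump_def
  apply (rule cmp_eq, (rule cmp_Rec cmp_add2 cmp_rules | assumption)+)
  apply (simp add: rech_sum)
  done

definition iterp where "iterp s = Rec Snd (Comp s (Pair (Comp Fst Fst) (Comp Snd Snd)))"
lemma rech_iter: "rech ps (\<lambda>w. S (pe (pf (pf w)) (ps (ps w)))) x n = ((\<lambda>st. S (pe (pf x) st)) ^^ n) (ps x)"
  by (induction n) auto
lemma cmp_iterp: "cmp s S \<Longrightarrow> cmp (iterp s) (\<lambda>z. ((\<lambda>st. S (pe (pf (pf z)) st)) ^^ ps z) (ps (pf z)))"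
  unfolding iterp_def
  apply (rule cmp_eq, (rule cmp_Rec cmp_rules | assumption)+)
  apply (simp add: rech_iter)
  done

definition iter0p where "iter0p s = Rec idp (Comp s (Comp Snd Snd))"
lemma rech_iter0: "rech (\<lambda>x. x) (\<lambda>w. S (ps (ps w))) x n = (S ^^ n) x"
  by (induction n) auto
lemma cmp_iter0p: "cmp s S \<Longrightarrow> cmp (iter0p s) (\<lambda>z. (S ^^ ps z) (pf z))"
  unfolding iter0p_def
  apply (rule cmp_eq, (rule cmp_Rec cmp_rules | assumption)+)
  apply (simp add: rech_iter0)
  done

lemmas cmp_lib = cmp_rules cmp_addp cmp_add2 cmp_predp cmp_subp cmp_sub2 cmp_ifz cmp_sump cmp_iterp cmp_iter0p




definition notp where "notp q = ifz q (constp 1) Zero"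
lemma cmp_notp: "cmp q Q \<Longrightarrow> cmp (notp q) (\<lambda>x. if Q x = 0 then 1 else 0)"
  unfolding notp_def by (rule cmp_eq, (rule cmp_lib | assumption)+, simp)

definition allv :: "(nat \<Rightarrow> nat) \<Rightarrow> nat \<Rightarrow> nat \<Rightarrow> nat \<Rightarrow> nat \<Rightarrow> nat" where
  "allv Pb u z k B = (\<Sum>a<k. if (\<Sum>b<B. Pb (pe (pe u z) (pe a b))) = 0 then 1 else 0)"

definition exbp where "exbp p0 = sump (Comp p0 (Pair (Comp Fst Fst) (Pair (Comp Snd Fst) Snd)))"
lemma cmp_exbp: "cmp p0 Pb \<Longrightarrow> cmp (exbp p0) (\<lambda>w. \<Sum>b<ps w. Pb (pe (pf (pf w)) (pe (ps (pf w)) b)))"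
  unfolding exbp_def by (rule cmp_eq, (rule cmp_lib | assumption)+, simp)

definition allp where "allp p0 = sump (notp (Comp (exbp p0) (Pair (Pair (Comp Fst Fst) Snd) (Comp Snd Fst))))"
lemma cmp_allp: "cmp p0 Pb \<Longrightarrow> cmp (allp p0) (\<lambda>w. allv Pb (pf (pf (pf w))) (ps (pf (pf w))) (ps w) (ps (pf w)))"
  unfolding allp_def allv_def by (rule cmp_eq, (rule cmp_lib cmp_notp cmp_exbp | assumption)+, simp)

definition stepf :: "(nat \<Rightarrow> nat) \<Rightarrow> nat \<Rightarrow> nat \<Rightarrow> nat \<Rightarrow> nat \<Rightarrow> nat" where
  "stepf Pb N k B st = (if pf (ps st) = 0 then st else
     pe (pf (pf (ps st) - 1)) (pe (ps (pf (ps st) - 1))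
       (if ps (ps st) = 0 then 0 else if pf (pf (ps st) - 1) - N = 0 then
          (if allv Pb (pf st) (pf (pf (ps st) - 1)) k B = 0 then 1 else 0) else 0)))"

definition stepp where "stepp p0 = (let Lc = Comp Fst (Comp Snd Snd); zp = Comp Fst (Comp predp Lc);
   N = Comp Fst Fst; k = Comp Fst (Comp Snd Fst); B = Comp Snd (Comp Snd Fst);
   u = Comp Fst Snd; ok = Comp Snd (Comp Snd Snd) in
  ifz Lc Snd (Pair zp (Pair (Comp Snd (Comp predp Lc))
     (ifz ok Zero (ifz (sub2 zp N) (notp (Comp (allp p0) (Pair (Pair (Pair u zp) B) k))) Zero)))))"

lemma cmp_stepp: "cmp p0 Pb \<Longrightarrow> cmp (stepp p0) (\<lambda>w. stepf Pb (pf (pf w)) (pf (ps (pf w))) (ps (ps (pf w))) (ps w))"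
  unfolding stepp_def Let_def
  apply (rule cmp_eq, (rule cmp_lib cmp_notp cmp_allp | assumption)+)
  apply (simp add: stepf_def)
  done

definition tlc :: "nat \<Rightarrow> nat" where "tlc l = ps (l - 1)"
definition nthc :: "nat \<Rightarrow> nat \<Rightarrow> nat" where "nthc L i = pf ((tlc ^^ i) L - 1)"

definition nthp where "nthp = Comp (Comp Fst predp) (iter0p (Comp Snd predp))"
lemma cmp_nthp: "cmp nthp (\<lambda>w. nthc (pf w) (ps w))"
  unfolding nthp_def nthc_def
  apply (rule cmp_eq, (rule cmp_lib | assumption)+)
  apply (simp add: tlc_def[abs_def])
  done

definition finalst :: "(nat \<Rightarrow> nat) \<Rightarrow> nat \<Rightarrow> nat \<Rightarrow> nat \<Rightarrow> nat" where
  "finalst Pb c x t = ((\<lambda>st. stepf Pb (ps (ps c)) (ps x) (ps t) st) ^^ (pf t))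
      (pe (nthc (ps (ps c)) (pf (ps c))) (pe (pf t) 1))"

definition Qf :: "(nat \<Rightarrow> nat) \<Rightarrow> nat \<Rightarrow> nat" where
  "Qf Pb w = (let fs = finalst Pb (pf (pf w)) (ps (pf w)) (ps w); y = pf (ps (pf w)) in
     if ps (ps fs) = 0 then 1 else (pf fs - y) + (y - pf fs))"

definition finp where "finp p0 = (let c = Comp Fst Fst; x = Comp Snd Fst; t = Snd;
   L = Comp Snd (Comp Snd c) in
   Comp (iterp (stepp p0))
     (Pair (Pair (Pair L (Pair (Comp Snd x) (Comp Snd t)))
                 (Pair (Comp nthp (Pair L (Comp Fst (Comp Snd c)))) (Pair (Comp Fst t) (constp 1))))
           (Comp Fst t)))"

lemma cmp_finp: "cmp p0 Pb \<Longrightarrow> cmp (finp p0) (\<lambda>w. finalst Pb (pf (pf w)) (ps (pf w)) (ps w))"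
  unfolding finp_def Let_def
  apply (rule cmp_eq, (rule cmp_lib cmp_stepp cmp_nthp | assumption)+)
  apply (simp add: finalst_def)
  done

definition Qp where "Qp p0 = (let y = Comp Fst (Comp Snd Fst); f = finp p0 in
   ifz (Comp Snd (Comp Snd f)) (constp 1) (add2 (sub2 (Comp Fst f) y) (sub2 y (Comp Fst f))))"

lemma cmp_Qp: "cmp p0 Pb \<Longrightarrow> cmp (Qp p0) (Qf Pb)"
  unfolding Qp_def Let_def
  apply (rule cmp_eq, (rule cmp_lib cmp_finp | assumption)+)
  apply (simp add: Qf_def Let_def)
  done




lemma allv_zero: "allv Pb u z k B = 0 \<longleftrightarrow> (\<forall>a<k. \<exists>b<B. Pb (pe (pe u z) (pe a b)) \<noteq> 0)"
  unfolding allv_def by auto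

fun chkB :: "(nat \<Rightarrow> nat) \<Rightarrow> nat \<Rightarrow> nat \<Rightarrow> nat \<Rightarrow> nat \<Rightarrow> nat list \<Rightarrow> bool" where
  "chkB Pb N k B u [] = True"
| "chkB Pb N k B u (z # zs) = (z \<le> N \<and> (\<forall>a<k. \<exists>b<B. Pb (pe (pe u z) (pe a b)) \<noteq> 0) \<and> chkB Pb N k B z zs)"

lemma funpow_fix: "f s = s \<Longrightarrow> (f ^^ m) s = s"
  by (induction m) auto

lemma iter_chain: "length zs \<le> m \<Longrightarrow>
  \<exists>v. (stepf Pb N k B ^^ m) (pe u (pe (list_encode zs) ok)) = pe (last (u # zs)) (pe 0 v) \<and>
      (v \<noteq> 0 \<longleftrightarrow> ok \<noteq> 0 \<and> chkB Pb N k B u zs)"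
proof (induction zs arbitrary: u ok m)
  case Nil
  have "stepf Pb N k B (pe u (pe 0 ok)) = pe u (pe 0 ok)" by (simp add: stepf_def)
  then have "(stepf Pb N k B ^^ m) (pe u (pe 0 ok)) = pe u (pe 0 ok)" by (rule funpow_fix)
  then show ?case by (intro exI[of _ ok]) simp
next
  case (Cons z zs)
  then obtain m' where m: "m = Suc m'" "length zs \<le> m'" by (cases m) auto
  define ok' where "ok' = (if ok = 0 then 0 else if z - N = 0 then
          (if allv Pb u z k B = 0 then 1 else 0) else 0::nat)"
  have st: "stepf Pb N k B (pe u (pe (list_encode (z # zs)) ok)) = pe z (pe (list_encode zs) ok')"
    by (simp add: stepf_def ok'_def)
  obtain v where v: "(stepf Pb N k B ^^ m') (pe z (pe (list_encode zs) ok')) = pe (last (z # zs)) (pe 0 v)"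
    "v \<noteq> 0 \<longleftrightarrow> ok' \<noteq> 0 \<and> chkB Pb N k B z zs" using Cons.IH[OF m(2)] by blast
  have "(stepf Pb N k B ^^ m) (pe u (pe (list_encode (z # zs)) ok)) =
     (stepf Pb N k B ^^ m') (stepf Pb N k B (pe u (pe (list_encode (z # zs)) ok)))"
    by (simp only: m funpow_Suc_right o_apply)
  also have "\<dots> = pe (last (z # zs)) (pe 0 v)" using v(1) st by simp
  finally have "(stepf Pb N k B ^^ m) (pe u (pe (list_encode (z # zs)) ok)) = pe (last (z # zs)) (pe 0 v)" .
  moreover have "v \<noteq> 0 \<longleftrightarrow> ok \<noteq> 0 \<and> chkB Pb N k B u (z # zs)"
    using v(2) by (auto simp: ok'_def allv_zero)
  ultimately show ?case by auto
qed

lemma length_le_list_encode: "length xs \<le> list_encode xs"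
proof (induction xs)
  case (Cons x xs)
  then show ?case using le_prod_encode_2[of "list_encode xs" x] by simp
qed simp

lemma nth_le_list_encode: "i < length xs \<Longrightarrow> xs ! i \<le> list_encode xs"
proof (induction xs arbitrary: i)
  case (Cons x xs)
  show ?case
  proof (cases i)
    case 0 then show ?thesis using le_prod_encode_1[of x "list_encode xs"] by simp
  next
    case (Suc j) then show ?thesis using Cons.IH[of j] Cons.prems le_prod_encode_2[of "list_encode xs" x] by simp
  qed
qed simp

lemma nthc_list: "i < length xs \<Longrightarrow> nthc (list_encode xs) i = xs ! i"
proof (induction xs arbitrary: i)
  case (Cons x xs)
  show ?case
  proof (cases i)
    case 0 then show ?thesis by (simp add: nthc_def)
  next
    case (Suc j)
    have "tlc (list_encode (x # xs)) = list_encode xs" by (simp add: tlc_def)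
    have "(tlc ^^ Suc j) (list_encode (x # xs)) = (tlc ^^ j) (tlc (list_encode (x # xs)))"
      by (simp only: funpow_Suc_right o_apply)
    then have "nthc (list_encode (x # xs)) i = nthc (list_encode xs) j"
      using \<open>tlc (list_encode (x # xs)) = list_encode xs\<close> by (simp add: nthc_def Suc)
    then show ?thesis using Cons Suc by simp
  qed
qed simp

lemma Qf_zero: "Qf Pb (pe (pe c x) t) = 0 \<longleftrightarrow>
   (chkB Pb (ps (ps c)) (ps x) (ps t) (nthc (ps (ps c)) (pf (ps c))) (list_decode (pf t)) \<and>
    last (nthc (ps (ps c)) (pf (ps c)) # list_decode (pf t)) = pf x)"
proof -
  let ?zs = "list_decode (pf t)"
  have "length ?zs \<le> pf t" using length_le_list_encode[of ?zs] by simp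
  from iter_chain[OF this, of Pb "ps (ps c)" "ps x" "ps t" "nthc (ps (ps c)) (pf (ps c))" 1]
  obtain v where v: "finalst Pb c x t = pe (last (nthc (ps (ps c)) (pf (ps c)) # ?zs)) (pe 0 v)"
    "v \<noteq> 0 \<longleftrightarrow> chkB Pb (ps (ps c)) (ps x) (ps t) (nthc (ps (ps c)) (pf (ps c))) ?zs"
    unfolding finalst_def by auto
  show ?thesis unfolding Qf_def Let_def using v by auto
qed

lemma chkB_mono: "chkB Pb N k B u zs \<Longrightarrow> B \<le> B' \<Longrightarrow> chkB Pb N k B' u zs"
  by (induction zs arbitrary: u) (auto, meson less_le_trans)

fun chkI :: "(nat \<Rightarrow> nat) \<Rightarrow> nat \<Rightarrow> nat \<Rightarrow> nat \<Rightarrow> nat list \<Rightarrow> bool" where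
  "chkI Pb N k u [] = True"
| "chkI Pb N k u (z # zs) = (z \<le> N \<and> (\<forall>a<k. \<exists>b. Pb (pe (pe u z) (pe a b)) \<noteq> 0) \<and> chkI Pb N k z zs)"

lemma bound_ex: "(\<forall>a<(k::nat). \<exists>b::nat. Q a b) \<Longrightarrow> \<exists>B::nat. \<forall>a<k. \<exists>b<B. Q a b"
proof (induction k)
  case 0 then show ?case by auto
next
  case (Suc k)
  then obtain B where B: "\<forall>a<k. \<exists>b<B. Q a b" by auto
  from Suc.prems obtain b0 where b0: "Q k b0" by auto
  have "\<forall>a<Suc k. \<exists>b<B + Suc b0. Q a b"
  proof (intro allI impI)
    fix a assume "a < Suc k"
    then consider "a < k" | "a = k" by linarith
    then show "\<exists>b<B + Suc b0. Q a b"
    proof cases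
      case 1
      then obtain b where "b < B" "Q a b" using B by blast
      then show ?thesis by (intro exI[of _ b]) simp
    next
      case 2
      then show ?thesis using b0 by (intro exI[of _ b0]) simp
    qed
  qed
  then show ?case by blast
qed

lemma chkI_B: "chkI Pb N k u zs \<longleftrightarrow> (\<exists>B. chkB Pb N k B u zs)"
proof (induction zs arbitrary: u)
  case Nil then show ?case by simp
next
  case (Cons z zs)
  show ?case
  proof
    assume h: "chkI Pb N k u (z # zs)"
    then obtain B1 where B1: "chkB Pb N k B1 z zs" using Cons.IH by auto
    from h have "\<forall>a<k. \<exists>b. Pb (pe (pe u z) (pe a b)) \<noteq> 0" by simp
    from bound_ex[OF this] obtain B2 where B2: "\<forall>a<k. \<exists>b<B2. Pb (pe (pe u z) (pe a b)) \<noteq> 0" by blast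
    have "chkB Pb N k (B1 + B2) z zs" using chkB_mono[OF B1] by simp
    moreover have "\<forall>a<k. \<exists>b<B1 + B2. Pb (pe (pe u z) (pe a b)) \<noteq> 0"
      using B2 by (meson less_le_trans le_add2)
    ultimately show "\<exists>B. chkB Pb N k B u (z # zs)" using h by auto
  next
    assume "\<exists>B. chkB Pb N k B u (z # zs)"
    then obtain B where "chkB Pb N k B u (z # zs)" by blast
    then show "chkI Pb N k u (z # zs)" using Cons.IH by auto
  qed
qed

lemma Qf_ex: "(\<exists>t. Qf Pb (pe (pe c x) t) = 0) \<longleftrightarrow>
   (\<exists>zs. chkI Pb (ps (ps c)) (ps x) (nthc (ps (ps c)) (pf (ps c))) zs \<and>
         last (nthc (ps (ps c)) (pf (ps c)) # zs) = pf x)"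
proof
  assume "\<exists>t. Qf Pb (pe (pe c x) t) = 0"
  then show "\<exists>zs. chkI Pb (ps (ps c)) (ps x) (nthc (ps (ps c)) (pf (ps c))) zs \<and>
         last (nthc (ps (ps c)) (pf (ps c)) # zs) = pf x"
    unfolding Qf_zero chkI_B by blast
next
  assume "\<exists>zs. chkI Pb (ps (ps c)) (ps x) (nthc (ps (ps c)) (pf (ps c))) zs \<and>
         last (nthc (ps (ps c)) (pf (ps c)) # zs) = pf x"
  then obtain zs B where h: "chkB Pb (ps (ps c)) (ps x) B (nthc (ps (ps c)) (pf (ps c))) zs"
     "last (nthc (ps (ps c)) (pf (ps c)) # zs) = pf x" unfolding chkI_B by blast
  have "Qf Pb (pe (pe c x) (pe (list_encode zs) B)) = 0" unfolding Qf_zero using h by simp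
  then show "\<exists>t. Qf Pb (pe (pe c x) t) = 0" by blast
qed




fun encode :: "recf \<Rightarrow> nat" where
  "encode Zero = 0" | "encode Succ = 1" | "encode Fst = 2" | "encode Snd = 3"
| "encode (Comp f g) = 4 + 8 * pe (encode f) (encode g)"
| "encode (Pair f g) = 5 + 8 * pe (encode f) (encode g)"
| "encode (Rec f g) = 6 + 8 * pe (encode f) (encode g)"
| "encode (Mu f) = 7 + 8 * encode f"

lemma decode_encode: "decode (encode p) = p"
proof (induction p)
  case Zero then show ?case by (subst decode.simps) (simp del: decode.simps)
next
  case Succ then show ?case by (subst decode.simps) (simp del: decode.simps)
next
  case Fst then show ?case by (subst decode.simps) (simp del: decode.simps)
next
  case Snd then show ?case by (subst decode.simps) (simp del: decode.simps)
next
  case (Comp f g) then show ?case by (subst decode.simps) (simp del: decode.simps add: Let_def)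
next
  case (Pair f g) then show ?case by (subst decode.simps) (simp del: decode.simps add: Let_def)
next
  case (Rec f g) then show ?case by (subst decode.simps) (simp del: decode.simps add: Let_def)
next
  case (Mu f) then show ?case by (subst decode.simps) (simp del: decode.simps add: Let_def)
qed

definition trip where "trip = Comp (Rec Zero (add2 (Comp Snd Snd) (Comp Succ (Comp Fst Snd)))) (Pair Zero idp)"
lemma rech_tri: "rech (\<lambda>x. 0) (\<lambda>w. Suc (ps (ps w) + pf (ps w))) x n = triangle n"
  by (induction n) auto
lemma cmp_trip: "cmp trip triangle"
  unfolding trip_def by (rule cmp_eq, (rule cmp_Rec cmp_lib | assumption)+, simp add: rech_tri)

definition pep where "pep p q = add2 (Comp trip (add2 p q)) p"
lemma cmp_pep: "cmp p P \<Longrightarrow> cmp q Q \<Longrightarrow> cmp (pep p q) (\<lambda>x. pe (P x) (Q x))"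
  unfolding pep_def by (rule cmp_eq, (rule cmp_trip cmp_lib | assumption)+, simp add: prod_encode_def)

definition dblp where "dblp p = add2 p p"
lemma cmp_dblp: "cmp p P \<Longrightarrow> cmp (dblp p) (\<lambda>x. 2 * P x)"
  unfolding dblp_def by (rule cmp_eq, (rule cmp_lib | assumption)+, simp)

definition codep where "codep j p q = add2 (constp j) (dblp (dblp (dblp (pep p q))))"
lemma cmp_codep: "cmp p P \<Longrightarrow> cmp q Q \<Longrightarrow> cmp (codep j p q) (\<lambda>x. j + 8 * pe (P x) (Q x))"
  unfolding codep_def by (rule cmp_eq, (rule cmp_pep cmp_dblp cmp_lib | assumption)+, simp)

lemma encode_constp: "encode (constp c) = ((\<lambda>y. 4 + 8 * pe 1 y) ^^ c) 0"
  by (induction c) auto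

definition codeKp where "codeKp = Comp (iter0p (codep 4 (constp 1) idp)) (Pair Zero idp)"
lemma cmp_codeKp: "cmp codeKp (\<lambda>c. encode (constp c))"
  unfolding codeKp_def encode_constp
  by (rule cmp_eq, (rule cmp_codep cmp_lib | assumption)+, simp)

definition Fp where "Fp U = codep 4 (constp (encode U)) (codep 5 codeKp (constp (encode idp)))"
lemma cmp_Fp: "cmp (Fp U) (\<lambda>c. encode (Comp U (Pair (constp c) idp)))"
  unfolding Fp_def
  by (rule cmp_eq, (rule cmp_codep cmp_codeKp cmp_lib | assumption)+, simp)

lemma W_encode: "W (encode (Comp U (Pair (constp c) idp))) = {x. \<exists>y. eval U (pe c x) y}"
proof -
  have "eval (Comp U (Pair (constp c) idp)) x y \<longleftrightarrow> eval U (pe c x) y" for x y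
  proof
    assume "eval (Comp U (Pair (constp c) idp)) x y"
    then obtain w where w: "eval (Pair (constp c) idp) x w" "eval U w y" by (auto elim: evC)
    have "cmp (Pair (constp c) idp) (\<lambda>x. pe c x)"
      by (rule cmp_eq, (rule cmp_lib | assumption)+, simp)
    with w show "eval U (pe c x) y" by (simp add: cmp_eval)
  next
    assume "eval U (pe c x) y"
    moreover have "eval (Pair (constp c) idp) x (pe c x)"
      using cmp_Pair[OF cmp_constp[of c] cmp_idp] by (simp add: cmp_def)
    ultimately show "eval (Comp U (Pair (constp c) idp)) x y" by (auto intro: eval.intros)
  qed
  then show ?thesis unfolding W_def phi_def decode_encode by auto
qed




definition reach :: "(nat \<Rightarrow> nat) \<Rightarrow> nat \<Rightarrow> nat \<Rightarrow> nat \<Rightarrow> nat \<Rightarrow> bool" where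
  "reach Pb N k u y \<longleftrightarrow> (\<exists>zs. chkI Pb N k u zs \<and> last (u # zs) = y)"

lemma reach_R:
  assumes hR: "\<And>x y. R x y \<longleftrightarrow> (\<forall>a. \<exists>b. P (pe (pe x y) (pe a b)))"
    and Pb: "Pb = (\<lambda>z. if P z then 1 else 0)"
    and "R x x'" "x' \<le> N" "reach Pb N k x' y"
  shows "reach Pb N k x y"
proof -
  from assms(5) obtain zs where zs: "chkI Pb N k x' zs" "last (x' # zs) = y" unfolding reach_def by blast
  have "chkI Pb N k x (x' # zs)" using zs(1) assms(3,4) hR Pb by auto
  moreover have "last (x # x' # zs) = y" using zs(2) by simp
  ultimately show ?thesis unfolding reach_def by blast
qed

lemma not_reach:
  assumes hR: "\<And>x y. R x y \<longleftrightarrow> (\<forall>a. \<exists>b. P (pe (pe x y) (pe a b)))"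
    and Pb: "Pb = (\<lambda>z. if P z then 1 else 0)"
    and eq: "equivp R"
    and "\<not> R x x'" "x' \<le> N"
  shows "\<exists>K. \<not> reach Pb N K x' x"
proof -
  define S where "S = {p. fst p \<le> N \<and> snd p \<le> N \<and> \<not> R (fst p) (snd p)}"
  have finS: "finite S"
    by (rule finite_subset[of _ "{..N} \<times> {..N}"]) (auto simp: S_def)
  define af where "af p = (SOME a. \<forall>b. \<not> P (pe (pe (fst p) (snd p)) (pe a b)))" for p
  have af: "\<forall>b. \<not> P (pe (pe (fst p) (snd p)) (pe (af p) b))" if "p \<in> S" for p
  proof -
    from that have "\<not> R (fst p) (snd p)" by (simp add: S_def)
    then have "\<exists>a. \<forall>b. \<not> P (pe (pe (fst p) (snd p)) (pe a b))" using hR by blast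
    then show ?thesis unfolding af_def by (rule someI_ex)
  qed
  define K where "K = (\<Sum>p\<in>S. Suc (af p))"
  have afK: "af p < K" if "p \<in> S" for p
  proof -
    have "Suc (af p) \<le> K" unfolding K_def using member_le_sum[OF that, of "\<lambda>p. Suc (af p)"] finS by simp
    then show ?thesis by simp
  qed
  have step: "R u z" if "u \<le> N" "z \<le> N" "\<forall>a<K. \<exists>b. Pb (pe (pe u z) (pe a b)) \<noteq> 0" for u z
  proof (rule ccontr)
    assume "\<not> R u z"
    then have "(u, z) \<in> S" using that by (simp add: S_def)
    from afK[OF this] that(3) obtain b where "Pb (pe (pe u z) (pe (af (u, z)) b)) \<noteq> 0" by blast
    with af[OF \<open>(u, z) \<in> S\<close>] Pb show False by (auto split: if_splits)
  qed
  have chain: "u \<le> N \<Longrightarrow> chkI Pb N K u zs \<Longrightarrow> R u (last (u # zs))" for u zs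
  proof (induction zs arbitrary: u)
    case Nil then show ?case using eq by (simp add: equivp_reflp)
  next
    case (Cons z zs)
    then have "R u z" "R z (last (z # zs))" using step by auto
    then show ?case using eq by (auto dest: equivp_transp)
  qed
  have "\<not> reach Pb N K x' x"
  proof
    assume "reach Pb N K x' x"
    then obtain zs where "chkI Pb N K x' zs" "last (x' # zs) = x" unfolding reach_def by blast
    then have "R x' x" using chain assms(5) by blast
    then show False using assms(4) eq by (auto dest: equivp_symp)
  qed
  then show ?thesis by blast
qed

theorem theorem3p4:
  fixes R :: "nat \<Rightarrow> nat \<Rightarrow> bool"
  assumes "equivp R" and "pi02 R"
  shows "finitarily_reducible R ceq"
proof -
  from assms(2) obtain P where decP: "decidable_pred P"
    and hR: "\<And>x y. R x y \<longleftrightarrow> (\<forall>a. \<exists>b. P (pe (pe x y) (pe a b)))"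
    unfolding pi02_def by blast
  from decP obtain e0 where e0: "\<forall>x. phi e0 x (if P x then 1 else 0)" unfolding decidable_pred_def by blast
  define Pb where "Pb = (\<lambda>z. if P z then 1 else 0::nat)"
  have p0: "cmp (decode e0) Pb" using e0 unfolding cmp_def phi_def Pb_def by simp
  define U where "U = Mu (Qp (decode e0))"
  define f where "f n i xs = encode (Comp U (Pair (constp (pe n (pe i (list_encode xs)))) idp))"
    for n i :: nat and xs :: "nat list"
  have comp3: "computable3 f"
    unfolding computable3_def
  proof (intro exI allI)
    fix n i xs
    show "phi (encode (Fp U)) (pe n (pe i (list_encode xs))) (f n i xs)"
      using cmp_Fp[of U] unfolding phi_def decode_encode f_def cmp_def by simp
  qed
  have Wf: "W (f n i xs) = {x. reach Pb (list_encode xs) (ps x) (xs ! i) (pf x)}"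
    if "i < length xs" for n i xs
  proof -
    have "W (f n i xs) = {x. \<exists>y. eval U (pe (pe n (pe i (list_encode xs))) x) y}"
      unfolding f_def by (rule W_encode)
    also have "\<dots> = {x. \<exists>t. Qf Pb (pe (pe (pe n (pe i (list_encode xs))) x) t) = 0}"
      unfolding U_def using cmp_Mu[OF cmp_Qp[OF p0]] by simp
    also have "\<dots> = {x. reach Pb (list_encode xs) (ps x) (xs ! i) (pf x)}"
      unfolding Qf_ex reach_def using nthc_list[OF that] by simp
    finally show ?thesis .
  qed
  have red: "R (xs ! i) (xs ! j) \<longleftrightarrow> ceq (f n i xs) (f n j xs)"
    if "i < length xs" "j < length xs" for n i j xs
  proof
    assume r: "R (xs ! i) (xs ! j)"
    then have r': "R (xs ! j) (xs ! i)" using assms(1) by (auto dest: equivp_symp)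
    have "reach Pb (list_encode xs) k (xs ! i) y \<longleftrightarrow> reach Pb (list_encode xs) k (xs ! j) y" for k y
      using reach_R[OF hR Pb_def r nth_le_list_encode[OF that(2)]]
        reach_R[OF hR Pb_def r' nth_le_list_encode[OF that(1)]] by blast
    then show "ceq (f n i xs) (f n j xs)" unfolding ceq_def Wf[OF that(1)] Wf[OF that(2)] by simp
  next
    assume c: "ceq (f n i xs) (f n j xs)"
    show "R (xs ! i) (xs ! j)"
    proof (rule ccontr)
      assume "\<not> R (xs ! i) (xs ! j)"
      from not_reach[OF hR Pb_def assms(1) this nth_le_list_encode[OF that(2)]]
      obtain K where K: "\<not> reach Pb (list_encode xs) K (xs ! j) (xs ! i)" by blast
      have "reach Pb (list_encode xs) K (xs ! i) (xs ! i)" unfolding reach_def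
        by (intro exI[of _ "[]"]) simp
      then have "pe (xs ! i) K \<in> W (f n i xs)" using Wf[OF that(1)] by simp
      moreover have "pe (xs ! i) K \<notin> W (f n j xs)" using Wf[OF that(2)] K by simp
      ultimately show False using c unfolding ceq_def by simp
    qed
  qed
  show ?thesis unfolding finitarily_reducible_def
    using comp3 red by (intro exI[of _ f]) auto
qed


end
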